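(* Let $q$ be a prime power, $n\ge1$, $d\in\mathbb F_q$, and $P=\sum_{s\ge0}a_s\theta^s\in\mathbb F_q[\theta]$ nonzero; put $P_2(\theta)=P(\theta+d)$. For a polynomial $R=\sum_s b_s\theta^s$ let $\mathfrak M(R,n,T)$ be the infinite matrix with rows and columns indexed by $i,j\in\{0,1,2,\dots\}$ and entries $$\mathfrak M(R,n,T)_{ij}=\sum_{l=0}^nT^{n-l}(-1)^l\binom nl b_{(i+1)q-(j+1)-l},$$ where $b_s=0$ for $s<0$ or $s>\deg R$. Let $W$ be the infinite upper triangular matrix with $W_{ij}=\binom ji d^{j-i}$ for $j\ge i$ and $W_{ij}=0$ for $j<i$ (with $d^0=1$). Then $W$ is invertible, all products below involve only finite sums, and $$\mathfrak M(P_2,n,T-d)=W\,\mathfrak M(P,n,T)\,W^{-1},$$ where $\mathfrak M(P_2,n,T-d)$ denotes $\mathfrak M(P_2,n,T)$ with $T$ replaced by $T-d$.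
   Context: Binomial coefficients are read in $\mathbb F_q$. The inverse of $W$ is the matrix of the same form with $d$ replaced by $-d$. *)

theory Defs
  imports "HOL-Computational_Algebra.Polynomial" "HOL-Library.Cardinality"
begin

definition bcoef :: "'a::zero poly \<Rightarrow> int \<Rightarrow> 'a" where
  "bcoef R s = (if s < 0 then 0 else coeff R (nat s))"

text \<open>The matrix M(R,n,t) with t the value substituted for the indeterminate T;
  entries are polynomials in T, i.e. elements of 'a poly. q = CARD('a).\<close>
definition Mmat :: "'a::{field,finite} poly \<Rightarrow> nat \<Rightarrow> 'a poly \<Rightarrow> nat \<Rightarrow> nat \<Rightarrow> 'a poly" where
  "Mmat R n t = (\<lambda>i j. \<Sum>l\<le>n. t ^ (n - l) * (-1) ^ l * of_nat (n choose l)
      * [: bcoef R ((int i + 1) * int (CARD('a)) - (int j + 1) - int l) :])"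

definition Wmat :: "'a::field \<Rightarrow> nat \<Rightarrow> nat \<Rightarrow> 'a poly" where
  "Wmat d = (\<lambda>i j. if i \<le> j then [: of_nat (j choose i) * d ^ (j - i) :] else 0)"

definition fin_prod :: "(nat \<Rightarrow> nat \<Rightarrow> 'a::semiring_0) \<Rightarrow> (nat \<Rightarrow> nat \<Rightarrow> 'a) \<Rightarrow> bool" where
  "fin_prod A B = (\<forall>i j. finite {k. A i k * B k j \<noteq> 0})"

definition imat_mult :: "(nat \<Rightarrow> nat \<Rightarrow> 'a::semiring_0) \<Rightarrow> (nat \<Rightarrow> nat \<Rightarrow> 'a) \<Rightarrow> nat \<Rightarrow> nat \<Rightarrow> 'a" where
  "imat_mult A B = (\<lambda>i j. \<Sum>k\<in>{k. A i k * B k j \<noteq> 0}. A i k * B k j)"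

definition imat_id :: "nat \<Rightarrow> nat \<Rightarrow> 'a::{zero,one}" where
  "imat_id = (\<lambda>i j. if i = j then 1 else 0)"

end

theory Submission
  imports Defs
begin

lemma fermat_card:
  fixes x :: "'a :: {field,finite}"
  shows "x ^ CARD('a) = x"
proof (cases "x = 0")
  case False
  have "x * (\<Prod>y\<in>UNIV-{0}. x * y) = x * x ^ (card (UNIV :: 'a set) - 1) * \<Prod>(UNIV-{0})"
    by (simp add: prod.distrib mult_ac)
  also have "x * x ^ (card (UNIV :: 'a set) - 1) = x ^ Suc (card (UNIV :: 'a set) - 1)"
    by (subst power_Suc) auto
  also have "Suc (card (UNIV :: 'a set) - 1) = card (UNIV :: 'a set)"
    using finite_UNIV_card_ge_0[where ?'a = 'a] by simp
  also have "(\<Prod>y\<in>UNIV-{0}. x * y) = (\<Prod>y\<in>UNIV-{0}. y)"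
    by (rule prod.reindex_bij_witness[of _ "\<lambda>y. y / x" "\<lambda>y. x * y"]) (use False in auto)
  finally show ?thesis
    by simp
qed (use finite_UNIV_card_ge_0[where ?'a = 'a] in auto)

lemma card_ge2: "CARD('a::{field,finite}) \<ge> 2"
proof -
  have "{0::'a, 1} \<subseteq> UNIV" by simp
  hence "card {0::'a,1} \<le> CARD('a)" by (intro card_mono) auto
  thus ?thesis by simp
qed

lemma frob:
  fixes d :: "'a :: {field,finite}"
  shows "[:d, 1:] ^ CARD('a) = monom 1 CARD('a) + [:d:]"
proof -
  let ?q = "CARD('a)"
  have q: "?q \<ge> 2" by (rule card_ge2)
  define p where "p = [:d, 1:] ^ ?q - monom 1 ?q"
  have dl: "degree ([:d, 1:] ^ ?q) = ?q" by (simp add: degree_power_eq)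
  have "degree p \<le> ?q" unfolding p_def using dl
    by (metis degree_diff_le degree_monom_le le_refl)
  moreover have "coeff p ?q = 0" unfolding p_def using coeff_linear_power[of d ?q] by simp
  ultimately have dp: "degree p < ?q"
    using q by (metis le_neq_implies_less leading_coeff_0_iff degree_0 less_le_trans zero_less_numeral nat_neq_iff)
  have "p = [:d:]"
  proof (rule poly_eqI_degree[where A = UNIV])
    fix x :: 'a
    have "poly p x = (x + d) ^ ?q - x ^ ?q" by (simp add: p_def poly_monom algebra_simps)
    also have "\<dots> = d" by (simp add: fermat_card)
    finally show "poly p x = poly [:d:] x" by simp
  next
    show "degree p < CARD('a)" by (rule dp)
  next show "degree [:d:] < CARD('a)" using q by simp
  qed
  thus ?thesis unfolding p_def by (simp add: algebra_simps)
qed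

lemma coeff_lin_pow:
  "coeff ([:a, b:] ^ n) i = (if i \<le> n then of_nat (n choose i) * b ^ i * a ^ (n - i) else (0::'a::comm_semiring_1))"
proof (cases "i \<le> n")
  case True thus ?thesis by (simp add: coeff_linear_poly_power)
next
  case False
  have "degree ([:a, b:] ^ n) \<le> n"
    using degree_power_le[of "[:a, b:]" n] degree_pCons_le[of a "[:b:]"] by (simp add: order_trans)
  with False show ?thesis by (simp add: coeff_eq_0)
qed

lemma const_pow: "[:c:] ^ m = [:(c::'a::comm_semiring_1) ^ m:]"
  by (induction m) (auto simp: mult.commute)

lemma lemD:
  fixes d :: "'a :: {field,finite}"
  assumes b: "b < CARD('a)"
  shows "coeff ([:d,1:] ^ (a * CARD('a) + b)) (i * CARD('a) + (CARD('a) - 1))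
       = (if b = CARD('a) - 1 \<and> i \<le> a then of_nat (a choose i) * d ^ (a - i) else 0)"
proof -
  let ?q = "CARD('a)"
  have q: "?q \<ge> 2" by (rule card_ge2)
  define R where "R = [:d, 1:] ^ b"
  have "[:d,1:] ^ (a * ?q + b) = ([:d,1:] ^ ?q) ^ a * R"
    by (simp add: R_def power_add flip: power_mult) (simp add: mult.commute)
  also have "([:d,1:] ^ ?q) ^ a = (\<Sum>k\<le>a. monom (of_nat (a choose k) * d ^ (a - k)) (k * ?q))"
    unfolding frob binomial_ring
  proof (intro sum.cong refl)
    fix k
    show "of_nat (a choose k) * monom 1 ?q ^ k * [:d:] ^ (a - k) =
         monom (of_nat (a choose k) * d ^ (a - k)) (k * ?q)"
      by (simp add: of_nat_poly monom_power mult.commute smult_monom const_pow)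
  qed
  finally have e: "[:d,1:] ^ (a * ?q + b) = (\<Sum>k\<le>a. monom (of_nat (a choose k) * d ^ (a - k)) (k * ?q) * R)"
    by (simp add: sum_distrib_right)
  have cR: "coeff R m = (if m \<le> b then of_nat (b choose m) * d ^ (b - m) else 0)" for m
    unfolding R_def coeff_lin_pow by simp
  have t: "coeff (monom (of_nat (a choose k) * d ^ (a - k)) (k * ?q) * R) (i * ?q + (?q - 1))
     = (if k = i \<and> b = ?q - 1 then of_nat (a choose k) * d ^ (a - k) else 0)" for k
  proof -
    have "coeff (monom (of_nat (a choose k) * d ^ (a - k)) (k * ?q) * R) (i * ?q + (?q - 1))
      = (if i * ?q + (?q - 1) < k * ?q then 0 else of_nat (a choose k) * d ^ (a - k) * coeff R (i * ?q + (?q - 1) - k * ?q))"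
      by (rule coeff_monom_mult)
    also have "\<dots> = (if k = i \<and> b = ?q - 1 then of_nat (a choose k) * d ^ (a - k) else 0)"
    proof (cases "k = i")
      case True
      have "coeff R (?q - 1) = (if b = ?q - 1 then 1 else 0)"
        using b by (simp add: cR, linarith)
      moreover have "\<not> i * ?q + (?q - 1) < i * ?q" "i * ?q + (?q - 1) - i * ?q = ?q - 1" using q by simp_all
      ultimately show ?thesis using True by (simp only: if_False) simp
    next
      case False
      show ?thesis
      proof (cases "k < i")
        case True
        then obtain e where "i = Suc (k + e)" using less_imp_Suc_add by blast
        hence "i * ?q = k * ?q + Suc e * ?q" by (simp add: algebra_simps)
        hence "i * ?q + (?q - 1) - k * ?q = Suc e * ?q + (?q - 1)" by linarith
        moreover have "Suc e * ?q + (?q - 1) > b" using b by simp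
        ultimately have "coeff R (i * ?q + (?q - 1) - k * ?q) = 0" by (simp add: cR)
        thus ?thesis using False True by simp
      next
        case False': False
        hence "i < k" using False by simp
        hence "(i + 1) * ?q \<le> k * ?q" by (intro mult_right_mono) auto
        hence "i * ?q + (?q - 1) < k * ?q" using q by simp
        thus ?thesis using False by (simp only: if_True if_False) simp
      qed
    qed
    finally show ?thesis .
  qed
  have "(\<Sum>k\<le>a. (if k = i \<and> b = ?q - 1 then of_nat (a choose k) * d ^ (a - k) else 0))
     = (\<Sum>k\<le>a. (if k = i then (if b = ?q - 1 then of_nat (a choose k) * d ^ (a - k) else 0) else 0))"
    by (intro sum.cong) auto
  also have "\<dots> = (if b = CARD('a) - 1 \<and> i \<le> a then of_nat (a choose i) * d ^ (a - i) else 0)"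
    by (simp only: sum.delta finite_atMost) auto
  finally show ?thesis unfolding e coeff_sum t .
qed

lemma lemD':
  "coeff ([:[:d:], 1:] ^ N) m = [:coeff ([:d::'a::comm_semiring_1, 1:] ^ N) m:]"
  by (simp add: coeff_lin_pow const_pow of_nat_poly mult.commute)

lemma pcompose_pow: "pcompose (p ^ k) r = (pcompose p r) ^ (k::nat)"
  by (induction k) (simp_all add: pcompose_mult pcompose_1)

lemma lemE:
  fixes G :: "'a::comm_ring_1 poly"
  assumes "degree G \<le> B"
  shows "coeff (pcompose G r) m = (\<Sum>k\<le>B. coeff G k * coeff (r ^ k) m)"
proof -
  have "pcompose G r = pcompose (\<Sum>i\<le>B. monom (coeff G i) i) r"
    using poly_as_sum_of_monoms'[OF assms] by simp
  also have "\<dots> = (\<Sum>i\<le>B. smult (coeff G i) (r ^ i))"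
    by (simp add: pcompose_sum monom_altdef pcompose_smult pcompose_pow pcompose_pCons)
  finally show ?thesis by (simp add: coeff_sum)
qed

lemma lemC:
  fixes G :: "'a::{field,finite} poly poly" and d :: 'a
  assumes dg: "degree G \<le> B"
  shows "(\<Sum>k\<le>B. Wmat d i k * coeff G (k * CARD('a) + (CARD('a) - 1)))
       = coeff (pcompose G [:[:d:], 1:]) (i * CARD('a) + (CARD('a) - 1))"
proof -
  let ?q = "CARD('a)"
  have q: "?q \<ge> 2" by (rule card_ge2)
  define h where "h k = k * ?q + (?q - 1)" for k
  define M where "M = B * ?q + (?q - 1)"
  define v where "v N = coeff ([:d, 1:] ^ N) (i * ?q + (?q - 1))" for N
  have "B * 1 \<le> B * ?q" using q by (intro mult_le_mono2) simp
  hence "B \<le> B * ?q" by simp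
  hence BM: "B \<le> M" unfolding M_def using q by linarith
  have "coeff (pcompose G [:[:d:], 1:]) (i * ?q + (?q - 1)) = (\<Sum>N\<le>M. coeff G N * [:v N:])"
    unfolding lemE[OF order_trans[OF dg BM]] lemD' v_def ..
  also have "\<dots> = (\<Sum>N\<in>h ` {..B}. coeff G N * [:v N:])"
  proof (rule sum.mono_neutral_right)
    show "h ` {..B} \<subseteq> {..M}"
    proof
      fix y assume "y \<in> h ` {..B}"
      then obtain x where x: "x \<le> B" "y = h x" by auto
      have "x * ?q \<le> B * ?q" using x by (intro mult_le_mono1)
      thus "y \<in> {..M}" unfolding x h_def M_def atMost_iff by linarith
    qed
    show "\<forall>N\<in>{..M} - h ` {..B}. coeff G N * [:v N:] = 0"
    proof
      fix N assume N: "N \<in> {..M} - h ` {..B}"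
      define a where "a = N div ?q"
      define b where "b = N mod ?q"
      have Nab: "N = a * ?q + b" unfolding a_def b_def by simp
      have b: "b < ?q" unfolding b_def using q by simp
      have "b \<noteq> ?q - 1"
      proof
        assume bq: "b = ?q - 1"
        have "N \<le> M" using N by simp
        hence "a * ?q \<le> B * ?q" using Nab bq unfolding M_def by linarith
        hence "a \<le> B" using q by simp
        hence "N \<in> h ` {..B}" using Nab bq unfolding h_def by auto
        thus False using N by simp
      qed
      hence "v N = 0" unfolding v_def Nab using lemD[OF b, of d a i] by simp
      thus "coeff G N * [:v N:] = 0" by simp
    qed
  qed simp
  also have "\<dots> = (\<Sum>k\<le>B. coeff G (h k) * [:v (h k):])"
  proof (rule sum.reindex[unfolded comp_def])
    show "inj_on h {..B}" unfolding inj_on_def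
    proof (intro ballI impI)
      fix x y assume "h x = h y"
      hence "x * ?q = y * ?q" unfolding h_def by linarith
      thus "x = y" using q by simp
    qed
  qed
  also have "\<dots> = (\<Sum>k\<le>B. Wmat d i k * coeff G (h k))"
  proof (rule sum.cong[OF refl])
    fix k
    have b: "?q - 1 < ?q" using q by simp
    have "v (h k) = (if i \<le> k then of_nat (k choose i) * d ^ (k - i) else 0)"
      unfolding v_def h_def using lemD[OF b, of d k i] by simp
    thus "coeff G (h k) * [:v (h k):] = Wmat d i k * coeff G (h k)"
      unfolding Wmat_def by (simp add: mult.commute)
  qed
  finally show ?thesis unfolding h_def ..
qed

definition cz :: "'b::zero poly \<Rightarrow> int \<Rightarrow> 'b" where
  "cz G s = (if s < 0 then 0 else coeff G (nat s))"

lemma const_sum: "[:sum f S:] = (\<Sum>x\<in>S. [:f x:])"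
proof (induction S rule: infinite_finite_induct)
  case (insert x F)
  have "[:sum f (insert x F):] = [:f x:] + [:sum f F:]"
    by (simp only: sum.insert[OF insert(1,2)] add_pCons add_0_left)
  thus ?case using insert by simp
qed auto

lemma lemA_gen:
  fixes R :: "'a::comm_ring_1 poly" and t :: "'a poly"
  shows "(\<Sum>l\<le>n. t ^ (n - l) * (-1) ^ l * of_nat (n choose l) * [: bcoef R (s - int l) :])
    = cz (map_poly (\<lambda>a. [:a:]) R * [:t, -1:] ^ n) s"
proof (cases "s < 0")
  case True
  thus ?thesis by (simp add: cz_def bcoef_def)
next
  case False
  define m where "m = nat s"
  have s: "s = int m" using False unfolding m_def by simp
  define f where "f l = t ^ (n - l) * (-1) ^ l * of_nat (n choose l) * [:coeff R (m - l):]" for l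
  have "(\<Sum>l\<le>n. t ^ (n - l) * (-1) ^ l * of_nat (n choose l) * [: bcoef R (s - int l) :])
      = (\<Sum>l\<le>n. if l \<le> m then f l else 0)"
    by (intro sum.cong refl) (auto simp: s bcoef_def f_def nat_diff_distrib)
  also have "\<dots> = sum f {l\<in>{..n}. l \<le> m}" by (rule sum.inter_filter[symmetric]) simp
  also have "{l\<in>{..n}. l \<le> m} = {l\<in>{..m}. l \<le> n}" by auto
  also have "sum f \<dots> = (\<Sum>l\<le>m. if l \<le> n then f l else 0)" by (rule sum.inter_filter) simp
  also have "\<dots> = (\<Sum>l\<le>m. coeff ([:t, -1:] ^ n) l * coeff (map_poly (\<lambda>a. [:a:]) R) (m - l))"
    by (intro sum.cong refl) (auto simp: f_def coeff_lin_pow coeff_map_poly mult_ac)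
  also have "\<dots> = cz (map_poly (\<lambda>a. [:a:]) R * [:t, -1:] ^ n) s"
    by (simp add: cz_def s coeff_mult mult.commute[of "map_poly _ R"])
  finally show ?thesis .
qed

lemma imat_mult_eq:
  assumes "finite S" "\<And>k. k \<notin> S \<Longrightarrow> A i k * B k j = 0"
  shows "imat_mult A B i j = (\<Sum>k\<in>S. A i k * B k j)"
  unfolding imat_mult_def
  by (rule sum.mono_neutral_left) (use assms in auto)

lemma fin_prodI:
  assumes "\<And>i j. \<exists>S. finite S \<and> (\<forall>k. k \<notin> S \<longrightarrow> A i k * B k j = 0)"
  shows "fin_prod A B"
  unfolding fin_prod_def
proof (intro allI)
  fix i j
  obtain S where "finite S" "\<forall>k. k \<notin> S \<longrightarrow> A i k * B k j = 0" using assms by blast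
  thus "finite {k. A i k * B k j \<noteq> 0}" by (metis (mono_tags, lifting) finite_subset mem_Collect_eq subsetI)
qed

lemma Wcoef: "Wmat d i k = [:coeff ([:d, 1:] ^ k) i:]"
  unfolding Wmat_def by (simp add: coeff_lin_pow)

lemma Wzero: "j < k \<Longrightarrow> Wmat d k j = 0"
  unfolding Wmat_def by simp

lemma fin_WW: "fin_prod (Wmat d) (Wmat e)"
proof (rule fin_prodI)
  fix i j
  show "\<exists>S. finite S \<and> (\<forall>k. k \<notin> S \<longrightarrow> Wmat d i k * Wmat e k j = 0)"
    by (rule exI[of _ "{..j}"]) (auto simp: Wzero)
qed

lemma deg_lin_pow: "degree ([:a, b:] ^ n) \<le> n"
  using degree_power_le[of "[:a, b:]" n] degree_pCons_le[of a "[:b:]"] by (simp add: order_trans)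

lemma WW:
  fixes d :: "'a::field"
  shows "imat_mult (Wmat d) (Wmat (-d)) = imat_id"
proof (intro ext)
  fix i j
  have "imat_mult (Wmat d) (Wmat (-d)) i j = (\<Sum>k\<le>j. Wmat d i k * Wmat (-d) k j)"
    by (rule imat_mult_eq) (auto simp: Wzero)
  also have "\<dots> = [:\<Sum>k\<le>j. coeff ([:-d, 1:] ^ j) k * coeff ([:d, 1:] ^ k) i:]"
    by (simp add: Wcoef const_sum mult.commute)
  also have "(\<Sum>k\<le>j. coeff ([:-d, 1:] ^ j) k * coeff ([:d, 1:] ^ k) i)
       = coeff (pcompose ([:-d, 1:] ^ j) [:d, 1:]) i"
    by (rule lemE[symmetric]) (rule deg_lin_pow)
  also have "pcompose ([:-d, 1:] ^ j) [:d, 1:] = [:0, 1:] ^ j"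
    by (simp add: pcompose_pow pcompose_pCons)
  also have "[:0, 1:] ^ j = (monom 1 j :: 'a poly)" by (simp add: monom_altdef)
  finally show "imat_mult (Wmat d) (Wmat (-d)) i j = imat_id i j"
    by (simp add: imat_id_def coeff_monom)
qed

lemma W'W:
  fixes d :: "'a::field"
  shows "imat_mult (Wmat (-d)) (Wmat d) = imat_id"
  using WW[of "-d"] by simp

lemma map_pcompose:
  fixes P :: "'a::comm_ring_1 poly"
  shows "pcompose (map_poly (\<lambda>a. [:a:]) P) [:[:d:], 1:] = map_poly (\<lambda>a. [:a:]) (pcompose P [:d, 1:])"
proof (rule poly_eqI)
  fix m
  have "coeff (pcompose (map_poly (\<lambda>a. [:a:]) P) [:[:d:], 1:]) m
      = (\<Sum>k\<le>degree P. coeff (map_poly (\<lambda>a. [:a:]) P) k * coeff ([:[:d:], 1:] ^ k) m)"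
    by (rule lemE) (rule map_poly_degree_leq)
  also have "\<dots> = [:\<Sum>k\<le>degree P. coeff P k * coeff ([:d, 1:] ^ k) m:]"
    by (simp add: const_sum lemD' coeff_map_poly mult.commute)
  also have "(\<Sum>k\<le>degree P. coeff P k * coeff ([:d, 1:] ^ k) m) = coeff (pcompose P [:d, 1:]) m"
    by (rule lemE[symmetric]) simp
  finally show "coeff (pcompose (map_poly (\<lambda>a. [:a:]) P) [:[:d:], 1:]) m
      = coeff (map_poly (\<lambda>a. [:a:]) (pcompose P [:d, 1:])) m"
    by (simp add: coeff_map_poly)
qed

lemma lemA:
  fixes R :: "'a::{field,finite} poly"
  shows "Mmat R n t i j = cz (map_poly (\<lambda>a. [:a:]) R * [:t, -1:] ^ n) (int (i * CARD('a) + (CARD('a) - 1)) - int j)"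
proof -
  have q: "CARD('a) \<ge> 2" by (rule card_ge2)
  have e: "(int i + 1) * int CARD('a) - (int j + 1) = int (i * CARD('a) + (CARD('a) - 1)) - int j"
    using q by (simp add: algebra_simps of_nat_diff)
  show ?thesis unfolding Mmat_def
    using lemA_gen[of t n R "(int i + 1) * int CARD('a) - (int j + 1)"] unfolding e
    by simp
qed

lemma cz_diff: "cz G (int N - int m) = (if m \<le> N then coeff G (N - m) else 0)"
  unfolding cz_def by (auto simp: nat_diff_distrib)

lemma Mzero:
  fixes P :: "'a::{field,finite} poly"
  assumes "degree (map_poly (\<lambda>a. [:a:]) P * [:t, -1:] ^ n) + j < k"
  shows "Mmat P n t k j = 0"
proof -
  have q: "CARD('a) \<ge> 2" by (rule card_ge2)
  have "k \<le> k * CARD('a)" using q by simp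
  hence "degree (map_poly (\<lambda>a. [:a:]) P * [:t, -1:] ^ n) < k * CARD('a) + (CARD('a) - 1) - j"
    using assms by linarith
  thus ?thesis unfolding lemA cz_diff by (simp add: coeff_eq_0)
qed

lemma inner:
  fixes P :: "'a::{field,finite} poly" and t :: "'a poly" and n :: nat and d :: 'a and j :: nat
  defines "F \<equiv> map_poly (\<lambda>a. [:a:]) P * [:t, -1:] ^ n"
  defines "Y \<equiv> [:[:-d:], 1:] ^ j"
  shows "(\<Sum>m\<le>j. Mmat P n t k m * Wmat (-d) m j) = coeff (F * Y) (k * CARD('a) + (CARD('a) - 1))"
proof -
  define N where "N = k * CARD('a) + (CARD('a) - 1)"
  define f where "f m = coeff F (N - m) * coeff Y m" for m
  have cY: "coeff Y m = 0" if "j < m" for m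
    using deg_lin_pow[of "[:-d:]" 1 j] that unfolding Y_def by (simp add: coeff_eq_0)
  have "(\<Sum>m\<le>j. Mmat P n t k m * Wmat (-d) m j) = (\<Sum>m\<le>j. if m \<le> N then f m else 0)"
    by (intro sum.cong refl)
      (simp add: lemA cz_diff N_def f_def F_def Y_def Wcoef lemD')
  also have "\<dots> = sum f {m\<in>{..j}. m \<le> N}" by (rule sum.inter_filter[symmetric]) simp
  also have "{m\<in>{..j}. m \<le> N} = {m\<in>{..N}. m \<le> j}" by auto
  also have "sum f \<dots> = (\<Sum>m\<le>N. if m \<le> j then f m else 0)" by (rule sum.inter_filter) simp
  also have "\<dots> = (\<Sum>m\<le>N. coeff Y m * coeff F (N - m))"
    by (intro sum.cong refl) (auto simp: f_def cY mult.commute)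
  also have "\<dots> = coeff (F * Y) N" by (simp add: coeff_mult mult.commute[of F])
  finally show ?thesis unfolding N_def .
qed

lemma pc_lin: "pcompose [:[:0, 1:], -1:] [:[:d:], 1:] = [:[:-d, 1:], -1::'a::comm_ring_1 poly:]"
  by (simp add: pcompose_pCons)

lemma pc_Y: "pcompose [:[:-d:], 1:] [:[:d:], 1:] = [:0, 1::'a::comm_ring_1 poly:]"
  by (simp add: pcompose_pCons)

theorem proposition5p1p2:
  fixes P :: "'a::{field,finite} poly" and d :: 'a and n :: nat
  assumes "n \<ge> 1" and "P \<noteq> 0"
  defines "P2 \<equiv> pcompose P [:d, 1:]"
  shows "fin_prod (Wmat d) (Wmat (-d)) \<and> fin_prod (Wmat (-d)) (Wmat d)
       \<and> imat_mult (Wmat d) (Wmat (-d)) = imat_id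
       \<and> imat_mult (Wmat (-d)) (Wmat d) = imat_id
       \<and> fin_prod (Wmat d) (Mmat P n [:0, 1:])
       \<and> fin_prod (imat_mult (Wmat d) (Mmat P n [:0, 1:])) (Wmat (-d))
       \<and> Mmat P2 n [:-d, 1:]
           = imat_mult (imat_mult (Wmat d) (Mmat P n [:0, 1:])) (Wmat (-d))"
proof -
  let ?q = "CARD('a)"
  let ?c = "\<lambda>a::'a. [:a:]"
  define t0 :: "'a poly" where "t0 = [:0, 1:]"
  define F where "F = map_poly ?c P * [:t0, -1:] ^ n"
  define D where "D = degree F"
  define M where "M = Mmat P n t0"
  have Mz: "M k j = 0" if "D + j < k" for k j
    using Mzero[of P t0 n j k] that unfolding M_def D_def F_def by simp
  have f1: "fin_prod (Wmat d) M"
  proof (rule fin_prodI)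
    fix i j
    show "\<exists>S. finite S \<and> (\<forall>k. k \<notin> S \<longrightarrow> Wmat d i k * M k j = 0)"
      by (rule exI[of _ "{..D + j}"]) (auto simp: Mz)
  qed
  have f2: "fin_prod (imat_mult (Wmat d) M) (Wmat (-d))"
  proof (rule fin_prodI)
    fix i j
    show "\<exists>S. finite S \<and> (\<forall>k. k \<notin> S \<longrightarrow> imat_mult (Wmat d) M i k * Wmat (-d) k j = 0)"
      by (rule exI[of _ "{..j}"]) (auto simp: Wzero)
  qed
  have main: "Mmat P2 n [:-d, 1:] = imat_mult (imat_mult (Wmat d) M) (Wmat (-d))"
  proof (intro ext)
    fix i j
    define Y where "Y = [:[:-d:], 1:] ^ j"
    define N where "N = i * ?q + (?q - 1)"
    have "imat_mult (imat_mult (Wmat d) M) (Wmat (-d)) i j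
        = (\<Sum>m\<le>j. imat_mult (Wmat d) M i m * Wmat (-d) m j)"
      by (rule imat_mult_eq) (auto simp: Wzero)
    also have "\<dots> = (\<Sum>m\<le>j. (\<Sum>k\<le>D + j. Wmat d i k * M k m) * Wmat (-d) m j)"
    proof (intro sum.cong refl)
      fix m assume "m \<in> {..j}"
      hence "imat_mult (Wmat d) M i m = (\<Sum>k\<le>D + j. Wmat d i k * M k m)"
        by (intro imat_mult_eq) (auto simp: Mz)
      thus "imat_mult (Wmat d) M i m * Wmat (-d) m j = (\<Sum>k\<le>D + j. Wmat d i k * M k m) * Wmat (-d) m j"
        by simp
    qed
    also have "\<dots> = (\<Sum>k\<le>D + j. Wmat d i k * (\<Sum>m\<le>j. M k m * Wmat (-d) m j))"
      by (simp add: sum_distrib_left sum_distrib_right mult.assoc sum.swap[of _ "{..j}"])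
    also have "\<dots> = (\<Sum>k\<le>D + j. Wmat d i k * coeff (F * Y) (k * ?q + (?q - 1)))"
      unfolding M_def F_def Y_def inner ..
    also have "\<dots> = coeff (pcompose (F * Y) [:[:d:], 1:]) N"
      unfolding N_def
    proof (rule lemC)
      have "degree Y \<le> j" unfolding Y_def by (rule deg_lin_pow)
      thus "degree (F * Y) \<le> D + j" unfolding D_def
        using degree_mult_le[of F Y] by linarith
    qed
    also have "pcompose (F * Y) [:[:d:], 1:]
        = (map_poly ?c P2 * [:[:-d, 1:], -1:] ^ n) * monom 1 j"
      unfolding F_def Y_def P2_def t0_def
      by (simp add: pcompose_mult pcompose_pow map_pcompose pc_lin pc_Y monom_altdef)
    also have "coeff \<dots> N = cz (map_poly ?c P2 * [:[:-d, 1:], -1:] ^ n) (int N - int j)"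
      unfolding cz_diff by (subst mult.commute) (simp add: coeff_monom_mult)
    also have "\<dots> = Mmat P2 n [:-d, 1:] i j"
      unfolding N_def lemA ..
    finally show "Mmat P2 n [:-d, 1:] i j = imat_mult (imat_mult (Wmat d) M) (Wmat (-d)) i j" ..
  qed
  show ?thesis
    using fin_WW[of d "-d"] fin_WW[of "-d" d] WW[of d] W'W[of d] f1 f2 main
    unfolding M_def t0_def by simp
qed

end
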